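(* Let $r\ge 2$ be a constant, and let $k\ge 2r$ and $n\ge k$. Let $T(k)$ be the optimization time of the (1+1) EA with bit flip probability $1/n$ on $\mathrm{Fork}_{k,r}$ (bit strings of length $k$), where $\mathrm{Fork}_{k,r}(x)=k+1$ if $x=0^r1^{k-r}$, $k+2$ if $x=1^{k-r}0^r$, and $|x|_1$ otherwise. Then $E(T(k))\in\Theta(n^{2r})$.
   Context: The (1+1) EA with bit flip probability $1/n$ on strings of length $k$: start with $x$ uniform in $\{0,1\}^k$; each iteration create $y$ by flipping each bit of $x$ independently with probability $1/n$, set $x\gets y$ if $f(y)\ge f(x)$. Optimization time = number of iterations until the optimum $1^{k-r}0^r$ is the current solution. Asymptotics are with respect to $n\to\infty$. *)

theory Defs
  imports "HOL-Probability.Probability"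
begin

text \<open>Bit strings of length k are modelled as boolean lists (True = 1).\<close>

definition fork :: "nat \<Rightarrow> nat \<Rightarrow> bool list \<Rightarrow> nat" where
  "fork k r x =
     (if x = replicate r False @ replicate (k - r) True then k + 1
      else if x = replicate (k - r) True @ replicate r False then k + 2
      else length (filter id x))"

definition fork_opt :: "nat \<Rightarrow> nat \<Rightarrow> bool list" where
  "fork_opt k r = replicate (k - r) True @ replicate r False"

primrec mutate :: "real \<Rightarrow> bool list \<Rightarrow> bool list pmf" where
  "mutate p [] = return_pmf []"
| "mutate p (b # bs) =
     bernoulli_pmf p \<bind> (\<lambda>c. mutate p bs \<bind> (\<lambda>ys. return_pmf ((if c then \<not> b else b) # ys)))"

definition ea_step :: "(bool list \<Rightarrow> nat) \<Rightarrow> nat \<Rightarrow> bool list \<Rightarrow> bool list pmf" where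
  "ea_step f n x = map_pmf (\<lambda>y. if f y \<ge> f x then y else x) (mutate (1 / real n) x)"

definition ea_init :: "nat \<Rightarrow> bool list pmf" where
  "ea_init k = pmf_of_set {xs. length xs = k}"

text \<open>Process stopped at the first time the optimum is the current solution:
  the value None means that the optimum has already been the current solution at
  some time \<le> t; Some x means that it has not, and x is the current solution.\<close>
definition ea_stopped_step ::
  "(bool list \<Rightarrow> nat) \<Rightarrow> nat \<Rightarrow> bool list \<Rightarrow> bool list option \<Rightarrow> bool list option pmf" where
  "ea_stopped_step f n opt s =
     (case s of None \<Rightarrow> return_pmf None
      | Some x \<Rightarrow> map_pmf (\<lambda>y. if y = opt then None else Some y) (ea_step f n x))"

definition ea_stopped :: "(bool list \<Rightarrow> nat) \<Rightarrow> nat \<Rightarrow> nat \<Rightarrow> bool list \<Rightarrow> nat \<Rightarrow> bool list option pmf" where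
  "ea_stopped f n k opt t =
     ((\<lambda>D. D \<bind> ea_stopped_step f n opt) ^^ t)
       (map_pmf (\<lambda>x. if x = opt then None else Some x) (ea_init k))"

text \<open>Expected optimization time E(T) = sum over t \<ge> 0 of Pr[T > t]
  (an extended non-negative real; may be infinite in general).\<close>
definition expected_opt_time :: "(bool list \<Rightarrow> nat) \<Rightarrow> nat \<Rightarrow> nat \<Rightarrow> bool list \<Rightarrow> ennreal" where
  "expected_opt_time f n k opt =
     (\<Sum>t. ennreal (measure_pmf.prob (ea_stopped f n k opt t) (range Some)))"

end

theory Submission
  imports Defs
begin

definition ham :: "bool list \<Rightarrow> bool list \<Rightarrow> nat" where
  "ham xs ys = length (filter (\<lambda>(a,b). a \<noteq> b) (zip xs ys))"

lemma ham_Cons[simp]: "ham (x#xs) (y#ys) = (if x \<noteq> y then 1 else 0) + ham xs ys"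
  by (simp add: ham_def)

lemma ham_le: "ham xs ys \<le> length xs"
  unfolding ham_def by (metis length_filter_le length_zip min.bounded_iff order_refl)

lemma mutate_Cons_eq:
  "mutate p (b # bs) = map_pmf (\<lambda>(c, ys). (c \<noteq> b) # ys) (pair_pmf (bernoulli_pmf p) (mutate p bs))"
  by (simp add: pair_pmf_def map_bind_pmf bind_return_pmf map_return_pmf)
     (intro bind_pmf_cong refl; auto)

lemma set_mutate: "ys \<in> set_pmf (mutate p xs) \<Longrightarrow> length ys = length xs"
  by (induction xs arbitrary: ys) auto

lemma pmf_mutate:
  assumes "0 \<le> p" "p \<le> 1"
  shows "pmf (mutate p xs) ys =
    (if length ys = length xs then p ^ ham xs ys * (1 - p) ^ (length xs - ham xs ys) else 0)"
proof (induction xs arbitrary: ys)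
  case Nil
  then show ?case by (auto simp: indicator_def ham_def)
next
  case (Cons b bs)
  show ?case
  proof (cases ys)
    case Nil
    have "pmf (mutate p (b # bs)) ys = 0" unfolding mutate_Cons_eq
      by (rule pmf_map_outside) (auto simp: Nil)
    then show ?thesis using Nil by simp
  next
    case (Cons y ys')
    have inj: "inj (\<lambda>(c, ys). (c \<noteq> b) # (ys::bool list))"
      by (auto simp: inj_def)
    have "ys = (\<lambda>(c, ys). (c \<noteq> b) # ys) (y \<noteq> b, ys')" using Cons by auto
    then have "pmf (mutate p (b # bs)) ys = pmf (bernoulli_pmf p) (y \<noteq> b) * pmf (mutate p bs) ys'"
      unfolding mutate_Cons_eq by (simp only: pmf_map_inj'[OF inj] pmf_pair)
    also have "\<dots> = (if length ys = length (b#bs) then p ^ ham (b#bs) ys * (1 - p) ^ (length (b#bs) - ham (b#bs) ys) else 0)"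
      using Cons.IH[of ys'] assms ham_le[of bs ys'] by (auto simp: Cons Suc_diff_le)
    finally show ?thesis .
  qed
qed


lemma ham_rev: "length xs = length ys \<Longrightarrow> ham (rev xs) (rev ys) = ham xs ys"
  by (simp add: ham_def zip_rev rev_filter[symmetric])

lemma ham_append: "length a = length c \<Longrightarrow> ham (a @ b) (c @ d) = ham a c + ham b d"
  by (simp add: ham_def)

lemma ham_replicate: "ham (replicate m a) (replicate m b) = (if a = b then 0 else m)"
  by (induction m) (auto simp: ham_def)

lemma mutate_rev:
  assumes "0 \<le> p" "p \<le> 1"
  shows "mutate p (rev x) = map_pmf rev (mutate p x)"
proof (rule pmf_eqI)
  fix y :: "bool list"
  have "pmf (map_pmf rev (mutate p x)) y = pmf (map_pmf rev (mutate p x)) (rev (rev y))" by simp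
  also have "\<dots> = pmf (mutate p x) (rev y)" by (rule pmf_map_inj') (simp add: inj_def)
  finally show "pmf (mutate p (rev x)) y = pmf (map_pmf rev (mutate p x)) y"
    using ham_rev[of "rev x" y] by (simp add: pmf_mutate[OF assms])
qed

definition trap :: "nat \<Rightarrow> nat \<Rightarrow> bool list" where
  "trap k r = replicate r False @ replicate (k - r) True"

context
  fixes k r :: nat
  assumes r1: "1 \<le> r" and kr: "2 * r \<le> k"
begin

lemma len_trap: "length (trap k r) = k" using kr by (simp add: trap_def)
lemma len_opt: "length (fork_opt k r) = k" using kr by (simp add: fork_opt_def)

lemma trap_ne_opt: "trap k r \<noteq> fork_opt k r"
proof -
  have "hd (trap k r) = False" using r1 by (cases r) (auto simp: trap_def)
  moreover have "hd (fork_opt k r) = True" using r1 kr by (cases "k - r") (auto simp: fork_opt_def)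
  ultimately show ?thesis by auto
qed

lemma rev_trap: "rev (trap k r) = fork_opt k r" by (simp add: trap_def fork_opt_def)
lemma rev_opt: "rev (fork_opt k r) = trap k r" by (simp add: trap_def fork_opt_def)

lemma ones_ne_trap: "replicate k True \<noteq> trap k r"
proof -
  have "hd (trap k r) = False" using r1 by (cases r) (auto simp: trap_def)
  moreover have "hd (replicate k True) = True" using r1 kr by (cases k) auto
  ultimately show ?thesis by auto
qed

lemma ones_ne_opt: "replicate k True \<noteq> fork_opt k r"
proof -
  have "last (fork_opt k r) = False" using r1 by (cases r) (auto simp: fork_opt_def)
  moreover have "last (replicate k True) = True" using r1 kr by (cases k) auto
  ultimately show ?thesis by auto
qed

lemma fork_trap: "fork k r (trap k r) = k + 1" by (simp add: fork_def trap_def)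
lemma fork_opt_val: "fork k r (fork_opt k r) = k + 2"
  using trap_ne_opt by (simp add: fork_def trap_def fork_opt_def)
lemma fork_other: "x \<noteq> trap k r \<Longrightarrow> x \<noteq> fork_opt k r \<Longrightarrow> fork k r x = length (filter id x)"
  by (simp add: fork_def trap_def fork_opt_def)

lemma fork_ge_count: "length x = k \<Longrightarrow> length (filter id x) \<le> fork k r x"
  by (auto simp: fork_def intro: order.trans[OF length_filter_le])

lemma ham_trap_opt: "ham (trap k r) (fork_opt k r) = 2 * r"
proof -
  have "trap k r = replicate r False @ replicate (k - 2*r) True @ replicate r True"
    using kr by (simp add: trap_def replicate_add[symmetric])
  moreover have "fork_opt k r = replicate r True @ replicate (k - 2*r) True @ replicate r False"
    using kr by (simp add: fork_opt_def replicate_add[symmetric])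
  ultimately show ?thesis by (simp add: ham_append ham_replicate)
qed

lemma ham_ones_opt: "ham (replicate k True) (fork_opt k r) = r"
proof -
  have "replicate k True = replicate (k - r) True @ replicate r True"
    using kr by (simp add: replicate_add[symmetric])
  then show ?thesis by (simp add: fork_opt_def ham_append ham_replicate)
qed

lemma ea_step_rev:
  assumes "x \<noteq> trap k r" "x \<noteq> fork_opt k r" "1 \<le> n"
  shows "ea_step (fork k r) n (rev x) = map_pmf rev (ea_step (fork k r) n x)"
proof -
  have p: "0 \<le> 1 / real n" "1 / real n \<le> 1" using assms(3) by auto
  have rx1: "rev x \<noteq> trap k r" using assms(2) rev_trap by (metis rev_rev_ident)
  have rx2: "rev x \<noteq> fork_opt k r" using assms(1) rev_opt by (metis rev_rev_ident)
  have fx: "fork k r (rev x) = fork k r x"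
    using fork_other[OF rx1 rx2] fork_other[OF assms(1,2)] by (simp add: rev_filter[symmetric])
  have key: "(fork k r (rev y) \<ge> fork k r (rev x)) = (fork k r y \<ge> fork k r x)"
    if y: "y \<in> set_pmf (mutate (1 / real n) x)" for y
  proof (cases "y = trap k r \<or> y = fork_opt k r")
    case True
    then have ly: "length x = k" using set_mutate[OF y] len_trap len_opt by auto
    have "fork k r x \<le> k" using fork_other[OF assms(1,2)] ly
      by (metis length_filter_le)
    moreover have "fork k r y \<ge> k + 1" "fork k r (rev y) \<ge> k + 1"
      using True rev_trap rev_opt fork_trap fork_opt_val by auto
    ultimately show ?thesis using fx by auto
  next
    case False
    then have "rev y \<noteq> trap k r" "rev y \<noteq> fork_opt k r" using rev_trap rev_opt by (metis rev_rev_ident)+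
    then have "fork k r (rev y) = fork k r y" using fork_other False by (simp add: rev_filter[symmetric])
    then show ?thesis using fx by simp
  qed
  show ?thesis
    unfolding ea_step_def mutate_rev[OF p] map_pmf_comp
    by (rule map_pmf_cong) (auto simp: key)
qed

end

definition gv :: "nat \<Rightarrow> real \<Rightarrow> real \<Rightarrow> real \<Rightarrow> nat \<Rightarrow> real" where
  "gv k W0 W1 W2 v = (if k + 2 \<le> v then 0 else if v = k + 1 then W2 else if v = k then W1 + W2
     else real (k - v) * W0 + W1 + W2)"

definition Wv :: "nat \<Rightarrow> real \<Rightarrow> real \<Rightarrow> real \<Rightarrow> nat \<Rightarrow> real" where
  "Wv k W0 W1 W2 v = (if v < k then W0 else if v = k then W1 else if v = k + 1 then W2 else 0)"

lemma gv_strict: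
  assumes "0 \<le> W0" "0 \<le> W1" "0 \<le> W2" "v < w"
  shows "gv k W0 W1 W2 w \<le> gv k W0 W1 W2 v - Wv k W0 W1 W2 v"
proof -
  consider "k + 2 \<le> v" | "v = k + 1" | "v = k" | "v < k" by linarith
  then show ?thesis
  proof cases
    case 1 then show ?thesis using assms by (simp add: gv_def Wv_def)
  next
    case 2 then have "k + 2 \<le> w" using assms by simp
    then show ?thesis using 2 by (simp add: gv_def Wv_def)
  next
    case 3 then have "k + 1 \<le> w" using assms by simp
    then show ?thesis using 3 assms by (auto simp: gv_def Wv_def)
  next
    case 4
    have "1 \<le> real (k - v)" using 4 by linarith
    then have a: "W0 \<le> real (k - v) * W0" using assms(1)
      by (metis mult_1 mult_right_mono)
    show ?thesis
    proof (cases "w < k")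
      case True
      have "real (k - w) + 1 \<le> real (k - v)" using True assms(4) by linarith
      then have "real (k - w) * W0 + W0 \<le> real (k - v) * W0" using assms(1)
        by (metis distrib_right mult_1 mult_right_mono)
      then show ?thesis using 4 True by (simp add: gv_def Wv_def)
    next
      case False
      then show ?thesis using 4 a assms by (auto simp: gv_def Wv_def)
    qed
  qed
qed

lemma gv_mono:
  assumes "0 \<le> W0" "0 \<le> W1" "0 \<le> W2" "v \<le> w"
  shows "gv k W0 W1 W2 w \<le> gv k W0 W1 W2 v"
proof (cases "v = w")
  case False
  then have "v < w" using assms by auto
  from gv_strict[OF assms(1-3) this] have "gv k W0 W1 W2 w \<le> gv k W0 W1 W2 v - Wv k W0 W1 W2 v" .
  moreover have "0 \<le> Wv k W0 W1 W2 v" using assms(1-3) by (simp add: Wv_def)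
  ultimately show ?thesis by linarith
qed simp

lemma gv_nonneg: "0 \<le> W0 \<Longrightarrow> 0 \<le> W1 \<Longrightarrow> 0 \<le> W2 \<Longrightarrow> 0 \<le> gv k W0 W1 W2 v"
  unfolding gv_def by simp

lemma gv_le: "0 \<le> W0 \<Longrightarrow> 0 \<le> W1 \<Longrightarrow> 0 \<le> W2 \<Longrightarrow> gv k W0 W1 W2 v \<le> real k * W0 + W1 + W2"
  unfolding gv_def by (simp add: mult_right_mono)

lemma ham_flip: "j < length xs \<Longrightarrow> ham xs (xs[j := \<not> xs ! j]) = 1"
proof (induction xs arbitrary: j)
  case Nil then show ?case by simp
next
  case (Cons a xs)
  show ?case
  proof (cases j)
    case 0
    have "ham xs xs = 0" by (induction xs) (auto simp: ham_def)
    then show ?thesis using 0 by simp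
  next
    case (Suc i) then show ?thesis using Cons by simp
  qed
qed

lemma count_flip: "j < length xs \<Longrightarrow> \<not> xs ! j \<Longrightarrow> length (filter id (xs[j := True])) = Suc (length (filter id xs))"
proof (induction xs arbitrary: j)
  case Nil then show ?case by simp
next
  case (Cons a xs)
  show ?case
  proof (cases j)
    case 0 then show ?thesis using Cons by simp
  next
    case (Suc i) then show ?thesis using Cons by simp
  qed
qed

lemma set_ea_step: "y \<in> set_pmf (ea_step f n x) \<Longrightarrow> length y = length x"
  unfolding ea_step_def by (auto dest: set_mutate)

lemma ea_stopped_Suc: "ea_stopped f n k opt (Suc t) = ea_stopped f n k opt t \<bind> ea_stopped_step f n opt"
  by (simp add: ea_stopped_def)

lemma finite_len: "finite {xs :: bool list. length xs = k}"
  using finite_lists_length_eq[of "UNIV :: bool set" k] by simp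

lemma nonempty_len: "{xs :: bool list. length xs = k} \<noteq> {}"
  by (auto intro: exI[of _ "replicate k False"])

lemma set_ea_init: "set_pmf (ea_init k) = {xs. length xs = k}"
  unfolding ea_init_def using finite_len nonempty_len by (simp add: set_pmf_of_set)

lemma set_ea_stopped:
  "s \<in> set_pmf (ea_stopped f n k opt t) \<Longrightarrow> s = None \<or> (\<exists>x. s = Some x \<and> length x = k \<and> x \<noteq> opt)"
proof (induction t arbitrary: s)
  case 0
  then show ?case by (auto simp: ea_stopped_def set_ea_init)
next
  case (Suc t)
  then obtain s0 where s0: "s0 \<in> set_pmf (ea_stopped f n k opt t)" "s \<in> set_pmf (ea_stopped_step f n opt s0)"
    by (auto simp: ea_stopped_Suc)
  show ?case
  proof (cases s0)
    case None then show ?thesis using s0 by (simp add: ea_stopped_step_def)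
  next
    case (Some x)
    then have "length x = k" using Suc.IH[OF s0(1)] by auto
    then show ?thesis using s0(2) Some by (auto simp: ea_stopped_step_def dest: set_ea_step)
  qed
qed

lemma Q_pos: "2 \<le> n \<Longrightarrow> 0 < (1 - 1 / real n) ^ n"
  by (simp add: field_simps)

lemma pmf_mutate_lb:
  assumes "length x = k" "length y = k" "k \<le> n" "2 \<le> n"
  shows "(1 / real n) ^ ham x y * (1 - 1 / real n) ^ n \<le> pmf (mutate (1 / real n) x) y"
proof -
  have "(1 - 1 / real n) ^ n \<le> (1 - 1 / real n) ^ (k - ham x y)"
    using assms by (intro power_decreasing) auto
  then show ?thesis using assms by (simp add: pmf_mutate mult_left_mono)
qed

definition Qn :: "nat \<Rightarrow> real" where "Qn n = (1 - 1 / real n) ^ n"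

definition gU :: "nat \<Rightarrow> nat \<Rightarrow> nat \<Rightarrow> nat \<Rightarrow> real" where
  "gU k r n v = gv k (real n / Qn n) (real n ^ r / Qn n) (real n ^ (2*r) / Qn n) v"
definition WU :: "nat \<Rightarrow> nat \<Rightarrow> nat \<Rightarrow> nat \<Rightarrow> real" where
  "WU k r n v = Wv k (real n / Qn n) (real n ^ r / Qn n) (real n ^ (2*r) / Qn n) v"

context
  fixes k r n :: nat
  assumes r1: "1 \<le> r" and kr: "2 * r \<le> k" and kn: "k \<le> n"
begin

lemma n2: "2 \<le> n" using r1 kr kn by linarith

lemma Qpos: "0 < Qn n" using Q_pos[OF n2] by (simp add: Qn_def)

lemma Ws_nonneg: "0 \<le> real n / Qn n" "0 \<le> real n ^ r / Qn n" "0 \<le> real n ^ (2*r) / Qn n"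
  using Qpos by auto

lemma target:
  assumes "length x = k" "x \<noteq> fork_opt k r"
  shows "\<exists>y. length y = k \<and> fork k r x < fork k r y \<and>
     1 \<le> WU k r n (fork k r x) * pmf (mutate (1 / real n) x) y"
proof -
  have np: "real n > 0" using n2 by simp
  have lb: "(1 / real n) ^ ham x y * Qn n \<le> pmf (mutate (1 / real n) x) y" if "length y = k" for y
    using pmf_mutate_lb[OF assms(1) that kn n2] by (simp add: Qn_def)
  have key: "1 \<le> c / Qn n * pmf (mutate (1 / real n) x) y"
    if "length y = k" "c = real n ^ ham x y" for c y
  proof -
    have "1 = c / Qn n * ((1 / real n) ^ ham x y * Qn n)"
      using that Qpos np by (simp add: field_simps)
    also have "\<dots> \<le> c / Qn n * pmf (mutate (1 / real n) x) y"
      using lb[OF that(1)] that Qpos np by (intro mult_left_mono) auto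
    finally show ?thesis by simp
  qed
  show ?thesis
  proof (cases "x = trap k r")
    case True
    have "1 \<le> WU k r n (fork k r x) * pmf (mutate (1 / real n) x) (fork_opt k r)"
      using key[OF len_opt[OF r1 kr], of "real n ^ (2*r)"] True ham_trap_opt[OF r1 kr] fork_trap[OF r1 kr]
      by (simp add: WU_def Wv_def)
    then show ?thesis using True fork_trap[OF r1 kr] fork_opt_val[OF r1 kr] len_opt[OF r1 kr]
      by (intro exI[of _ "fork_opt k r"]) auto
  next
    case nt: False
    show ?thesis
    proof (cases "x = replicate k True")
      case True
      have fx: "fork k r x = k" using fork_other[OF r1 kr nt assms(2)] True by simp
      have "1 \<le> WU k r n (fork k r x) * pmf (mutate (1 / real n) x) (fork_opt k r)"
        using key[OF len_opt[OF r1 kr], of "real n ^ r"] True ham_ones_opt[OF r1 kr] fx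
        by (simp add: WU_def Wv_def)
      then show ?thesis using fx fork_opt_val[OF r1 kr] len_opt[OF r1 kr]
        by (intro exI[of _ "fork_opt k r"]) auto
    next
      case False
      have "False \<in> set x"
      proof (rule ccontr)
        assume "False \<notin> set x"
        then have "\<forall>b \<in> set x. b = True" by (metis (full_types))
        then have "x = replicate (length x) True" by (simp add: replicate_length_same)
        then show False using False assms(1) by simp
      qed
      then obtain j where j: "j < length x" "x ! j = False" by (metis in_set_conv_nth)
      define y where "y = x[j := True]"
      have ly: "length y = k" using assms(1) by (simp add: y_def)
      have hy: "ham x y = 1" using ham_flip[OF j(1)] j(2) by (simp add: y_def)
      have cy: "length (filter id y) = Suc (length (filter id x))" using count_flip[OF j(1)] j(2)
        by (simp add: y_def)
      have fx: "fork k r x = length (filter id x)" using fork_other[OF r1 kr nt assms(2)] .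
      have "fork k r x < k"
      proof -
        have "length (filter id x) < length x"
          using \<open>False \<in> set x\<close> by (intro length_filter_less) auto
        then show ?thesis using fx assms(1) by simp
      qed
      moreover have "fork k r x < fork k r y"
        using fork_ge_count[OF r1 kr ly] cy fx by simp
      moreover have "1 \<le> WU k r n (fork k r x) * pmf (mutate (1 / real n) x) y"
        using key[OF ly, of "real n"] hy \<open>fork k r x < k\<close> by (simp add: WU_def Wv_def)
      ultimately show ?thesis using ly by blast
    qed
  qed
qed

end

context
  fixes k r n :: nat
  assumes r1: "1 \<le> r" and kr: "2 * r \<le> k" and kn: "k \<le> n"
begin

lemma drift_up:
  assumes x: "length x = k" "x \<noteq> fork_opt k r"
  shows "(\<integral>\<^sup>+ z. ennreal (gU k r n (fork k r z)) \<partial>ea_step (fork k r) n x) + 1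
          \<le> ennreal (gU k r n (fork k r x))"
proof -
  obtain ys where ys: "length ys = k" "fork k r x < fork k r ys"
     "1 \<le> WU k r n (fork k r x) * pmf (mutate (1 / real n) x) ys"
    using target[OF r1 kr kn x] by blast
  define acc where "acc z = (if fork k r x \<le> fork k r z then z else x)" for z
  define A where "A z = ennreal (gU k r n (fork k r (acc z)))" for z
  define c where "c = WU k r n (fork k r x)"
  have W: "0 \<le> real n / Qn n" "0 \<le> real n ^ r / Qn n" "0 \<le> real n ^ (2*r) / Qn n"
    using Ws_nonneg[OF r1 kr kn] by auto
  have c0: "0 \<le> c" using W by (simp add: c_def WU_def Wv_def)
  have pw: "A z + ennreal c * indicator {ys} z \<le> ennreal (gU k r n (fork k r x))" for z
  proof (cases "z = ys")
    case True
    have "gU k r n (fork k r ys) \<le> gU k r n (fork k r x) - c"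
      using gv_strict[OF W ys(2)] by (simp add: gU_def c_def WU_def)
    moreover have "0 \<le> gU k r n (fork k r ys)" using gv_nonneg[OF W] by (simp add: gU_def)
    ultimately show ?thesis using True ys(2) c0
      by (simp add: A_def acc_def ennreal_plus[symmetric] del: ennreal_plus)
  next
    case False
    have "fork k r x \<le> fork k r (acc z)" by (simp add: acc_def)
    then have "gU k r n (fork k r (acc z)) \<le> gU k r n (fork k r x)"
      using gv_mono[OF W] by (simp add: gU_def)
    then show ?thesis using False by (simp add: A_def ennreal_leI)
  qed
  have "(\<integral>\<^sup>+ z. ennreal (gU k r n (fork k r z)) \<partial>ea_step (fork k r) n x) = (\<integral>\<^sup>+ z. A z \<partial>mutate (1 / real n) x)"
    by (simp add: ea_step_def A_def acc_def)
  moreover have "(\<integral>\<^sup>+ z. A z \<partial>mutate (1 / real n) x) + 1 \<le>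
      (\<integral>\<^sup>+ z. A z \<partial>mutate (1 / real n) x) + ennreal c * ennreal (pmf (mutate (1 / real n) x) ys)"
    using ys(3) c0 by (intro add_left_mono) (simp add: c_def ennreal_mult[symmetric] del: ennreal_mult)
  moreover have "\<dots> = (\<integral>\<^sup>+ z. A z + ennreal c * indicator {ys} z \<partial>mutate (1 / real n) x)"
    by (simp add: nn_integral_add nn_integral_cmult_indicator emeasure_pmf_single)
  moreover have "\<dots> \<le> (\<integral>\<^sup>+ z. ennreal (gU k r n (fork k r x)) \<partial>mutate (1 / real n) x)"
    by (intro nn_integral_mono pw)
  moreover have "\<dots> = ennreal (gU k r n (fork k r x))"
    by (simp add: measure_pmf.emeasure_space_1)
  ultimately show ?thesis by simp
qed


definition GU :: "bool list option \<Rightarrow> ennreal" where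
  "GU s = (case s of None \<Rightarrow> 0 | Some x \<Rightarrow> ennreal (gU k r n (fork k r x)))"

lemma step_up:
  assumes "s = None \<or> (\<exists>x. s = Some x \<and> length x = k \<and> x \<noteq> fork_opt k r)"
  shows "(\<integral>\<^sup>+ s'. GU s' \<partial>ea_stopped_step (fork k r) n (fork_opt k r) s) + indicator (range Some) s \<le> GU s"
  using assms
proof
  assume "s = None" then show ?thesis by (simp add: ea_stopped_step_def GU_def)
next
  assume "\<exists>x. s = Some x \<and> length x = k \<and> x \<noteq> fork_opt k r"
  then obtain x where x: "s = Some x" "length x = k" "x \<noteq> fork_opt k r" by blast
  have eq: "GU (if z = fork_opt k r then None else Some z) = ennreal (gU k r n (fork k r z))" for z
    using fork_opt_val[OF r1 kr] by (simp add: GU_def gU_def gv_def)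
  have "(\<integral>\<^sup>+ s'. GU s' \<partial>ea_stopped_step (fork k r) n (fork_opt k r) s)
     = (\<integral>\<^sup>+ z. ennreal (gU k r n (fork k r z)) \<partial>ea_step (fork k r) n x)"
    using x(1) by (simp add: ea_stopped_step_def eq)
  then show ?thesis using drift_up[OF x(2,3)] x(1)
    by (simp add: GU_def)
qed

lemma chain_up:
  "(\<integral>\<^sup>+ s. GU s \<partial>ea_stopped (fork k r) n k (fork_opt k r) (Suc t))
     + emeasure (ea_stopped (fork k r) n k (fork_opt k r) t) (range Some)
   \<le> (\<integral>\<^sup>+ s. GU s \<partial>ea_stopped (fork k r) n k (fork_opt k r) t)"
proof -
  let ?D = "ea_stopped (fork k r) n k (fork_opt k r) t"
  let ?S = "ea_stopped_step (fork k r) n (fork_opt k r)"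
  have "(\<integral>\<^sup>+ s. GU s \<partial>ea_stopped (fork k r) n k (fork_opt k r) (Suc t)) + emeasure ?D (range Some)
      = (\<integral>\<^sup>+ s. (\<integral>\<^sup>+ s'. GU s' \<partial>?S s) + indicator (range Some) s \<partial>?D)"
    by (simp add: ea_stopped_Suc nn_integral_add)
  also have "\<dots> \<le> (\<integral>\<^sup>+ s. GU s \<partial>?D)"
    by (intro nn_integral_mono_AE) (auto simp: AE_measure_pmf_iff intro!: step_up dest: set_ea_stopped)
  finally show ?thesis .
qed

lemma tele_up:
  "(\<Sum>t<m. emeasure (ea_stopped (fork k r) n k (fork_opt k r) t) (range Some))
     + (\<integral>\<^sup>+ s. GU s \<partial>ea_stopped (fork k r) n k (fork_opt k r) m)
   \<le> (\<integral>\<^sup>+ s. GU s \<partial>ea_stopped (fork k r) n k (fork_opt k r) 0)"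
proof (induction m)
  case 0 then show ?case by simp
next
  case (Suc m)
  have "(\<Sum>t<Suc m. emeasure (ea_stopped (fork k r) n k (fork_opt k r) t) (range Some))
     + (\<integral>\<^sup>+ s. GU s \<partial>ea_stopped (fork k r) n k (fork_opt k r) (Suc m))
     = (\<Sum>t<m. emeasure (ea_stopped (fork k r) n k (fork_opt k r) t) (range Some))
     + ((\<integral>\<^sup>+ s. GU s \<partial>ea_stopped (fork k r) n k (fork_opt k r) (Suc m))
        + emeasure (ea_stopped (fork k r) n k (fork_opt k r) m) (range Some))"
    by (simp add: algebra_simps)
  also have "\<dots> \<le> (\<Sum>t<m. emeasure (ea_stopped (fork k r) n k (fork_opt k r) t) (range Some))
     + (\<integral>\<^sup>+ s. GU s \<partial>ea_stopped (fork k r) n k (fork_opt k r) m)"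
    by (intro add_left_mono chain_up)
  finally show ?case using Suc.IH by (rule order.trans)
qed

lemma upper_partial:
  "(\<Sum>t<m. measure (ea_stopped (fork k r) n k (fork_opt k r) t) (range Some))
     \<le> real k * (real n / Qn n) + real n ^ r / Qn n + real n ^ (2*r) / Qn n"
proof -
  define B where "B = real k * (real n / Qn n) + real n ^ r / Qn n + real n ^ (2*r) / Qn n"
  have W: "0 \<le> real n / Qn n" "0 \<le> real n ^ r / Qn n" "0 \<le> real n ^ (2*r) / Qn n"
    using Ws_nonneg[OF r1 kr kn] by auto
  have GB: "GU s \<le> ennreal B" for s
    using gv_le[OF W] gv_nonneg[OF W] by (cases s) (auto simp: GU_def gU_def B_def ennreal_leI)
  have "ennreal (\<Sum>t<m. measure (ea_stopped (fork k r) n k (fork_opt k r) t) (range Some))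
      = (\<Sum>t<m. emeasure (ea_stopped (fork k r) n k (fork_opt k r) t) (range Some))"
    by (simp add: measure_pmf.emeasure_eq_measure sum_ennreal)
  also have "\<dots> \<le> (\<integral>\<^sup>+ s. GU s \<partial>ea_stopped (fork k r) n k (fork_opt k r) 0)"
    using tele_up[of m] by (rule order_trans[rotated]) simp
  also have "\<dots> \<le> (\<integral>\<^sup>+ s. ennreal B \<partial>ea_stopped (fork k r) n k (fork_opt k r) 0)"
    by (intro nn_integral_mono GB)
  also have "\<dots> = ennreal B" by (simp add: measure_pmf.emeasure_space_1)
  finally show ?thesis unfolding B_def
    using W Qpos[OF r1 kr kn] by (subst (asm) ennreal_le_iff) (auto intro!: add_nonneg_nonneg)
qed

end

definition piS :: "nat \<Rightarrow> nat \<Rightarrow> bool list option \<Rightarrow> bool list option" where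
  "piS k r s = (case s of None \<Rightarrow> None | Some x \<Rightarrow> if x = trap k r then None else Some x)"

definition S2 :: "nat \<Rightarrow> nat \<Rightarrow> nat \<Rightarrow> bool list option \<Rightarrow> bool list option pmf" where
  "S2 k r n s = (case s of None \<Rightarrow> return_pmf None
     | Some x \<Rightarrow> map_pmf (piS k r) (ea_stopped_step (fork k r) n (fork_opt k r) (Some x)))"

definition Yd :: "nat \<Rightarrow> nat \<Rightarrow> nat \<Rightarrow> nat \<Rightarrow> bool list option pmf" where
  "Yd k r n t = map_pmf (piS k r) (ea_stopped (fork k r) n k (fork_opt k r) t)"

context
  fixes k r n :: nat
  assumes r1: "1 \<le> r" and kr: "2 * r \<le> k" and kn: "k \<le> n"
begin

lemma set_ea_step_trap: "set_pmf (ea_step (fork k r) n (trap k r)) \<subseteq> {trap k r, fork_opt k r}"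
proof
  fix y assume y: "y \<in> set_pmf (ea_step (fork k r) n (trap k r))"
  then obtain z where z: "z \<in> set_pmf (mutate (1 / real n) (trap k r))"
    "y = (if fork k r (trap k r) \<le> fork k r z then z else trap k r)"
    by (auto simp: ea_step_def)
  have lz: "length z = k" using set_mutate[OF z(1)] len_trap[OF r1 kr] by simp
  show "y \<in> {trap k r, fork_opt k r}"
  proof (cases "z = trap k r \<or> z = fork_opt k r")
    case False
    then have "fork k r z = length (filter id z)" using fork_other[OF r1 kr] by auto
    then have "fork k r z \<le> k" using lz by (metis length_filter_le)
    then show ?thesis using z(2) fork_trap[OF r1 kr] by auto
  qed (use z(2) in auto)
qed

lemma pT_eq: "pmf (ea_step (fork k r) n (trap k r)) (fork_opt k r) = pmf (mutate (1 / real n) (trap k r)) (fork_opt k r)"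
proof -
  have "(\<lambda>z. if fork k r (trap k r) \<le> fork k r z then z else trap k r) -` {fork_opt k r} = {fork_opt k r}"
    using fork_trap[OF r1 kr] fork_opt_val[OF r1 kr] trap_ne_opt[OF r1 kr] by (auto split: if_splits)
  then show ?thesis by (simp add: ea_step_def pmf_map measure_pmf_single)
qed

lemma Y_step:
  assumes "s = None \<or> (\<exists>x. s = Some x \<and> length x = k \<and> x \<noteq> fork_opt k r)"
  shows "map_pmf (piS k r) (ea_stopped_step (fork k r) n (fork_opt k r) s) = S2 k r n (piS k r s)"
proof (cases "s = Some (trap k r)")
  case True
  have "\<forall>y\<in>set_pmf (ea_step (fork k r) n (trap k r)). piS k r (if y = fork_opt k r then None else Some y) = None"
    using set_ea_step_trap by (auto simp: piS_def)
  then have "map_pmf (\<lambda>y. piS k r (if y = fork_opt k r then None else Some y)) (ea_step (fork k r) n (trap k r))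
      = map_pmf (\<lambda>_. None) (ea_step (fork k r) n (trap k r))"
    by (intro map_pmf_cong) auto
  moreover have "piS k r s = None" using True by (simp add: piS_def)
  ultimately show ?thesis using True by (simp add: S2_def ea_stopped_step_def map_pmf_comp)
next
  case False
  show ?thesis
  proof (cases s)
    case None then show ?thesis by (simp add: S2_def piS_def ea_stopped_step_def)
  next
    case (Some x)
    then have "piS k r s = Some x" using False by (simp add: piS_def)
    then show ?thesis using Some by (simp only: S2_def option.case)
  qed
qed

lemma Y_Suc: "Yd k r n (Suc t) = Yd k r n t \<bind> S2 k r n"
proof -
  have "Yd k r n (Suc t) = ea_stopped (fork k r) n k (fork_opt k r) t \<bind>
      (\<lambda>s. map_pmf (piS k r) (ea_stopped_step (fork k r) n (fork_opt k r) s))"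
    by (simp add: Yd_def ea_stopped_Suc map_bind_pmf)
  also have "\<dots> = ea_stopped (fork k r) n k (fork_opt k r) t \<bind> (\<lambda>s. S2 k r n (piS k r s))"
    by (intro bind_pmf_cong refl Y_step) (auto dest: set_ea_stopped)
  also have "\<dots> = Yd k r n t \<bind> S2 k r n" by (simp add: Yd_def bind_map_pmf)
  finally show ?thesis .
qed

lemma set_Y: "s \<in> set_pmf (Yd k r n t) \<Longrightarrow> s = None \<or> (\<exists>x. s = Some x \<and> x \<noteq> trap k r \<and> x \<noteq> fork_opt k r)"
  by (auto simp: Yd_def piS_def dest!: set_ea_stopped split: if_splits)

lemma rho_rev: "map_option rev (piS k r (if y = fork_opt k r then None else Some y))
    = piS k r (if rev y = fork_opt k r then None else Some (rev y))"
  using rev_trap[OF r1 kr] rev_opt[OF r1 kr] by (auto simp: piS_def) (metis rev_rev_ident)+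

lemma S2_rev:
  assumes "s = None \<or> (\<exists>x. s = Some x \<and> x \<noteq> trap k r \<and> x \<noteq> fork_opt k r)"
  shows "map_pmf (map_option rev) (S2 k r n s) = S2 k r n (map_option rev s)"
  using assms
proof
  assume "s = None" then show ?thesis by (simp add: S2_def)
next
  assume "\<exists>x. s = Some x \<and> x \<noteq> trap k r \<and> x \<noteq> fork_opt k r"
  then obtain x where x: "s = Some x" "x \<noteq> trap k r" "x \<noteq> fork_opt k r" by blast
  have n1: "1 \<le> n" using r1 kr kn by linarith
  show ?thesis
    using x by (simp add: S2_def ea_stopped_step_def map_pmf_comp rho_rev ea_step_rev[OF r1 kr x(2,3) n1])
qed

lemma init_rev: "map_pmf rev (ea_init k) = ea_init k"
proof -
  have "rev ` {xs :: bool list. length xs = k} = {xs. length xs = k}"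
    by (auto simp: image_iff) (metis length_rev rev_rev_ident)
  then show ?thesis unfolding ea_init_def
    by (subst map_pmf_of_set_inj) (auto simp: finite_len nonempty_len Ex_list_of_length)
qed

lemma Y_sym: "map_pmf (map_option rev) (Yd k r n t) = Yd k r n t"
proof (induction t)
  case 0
  have "map_pmf (map_option rev) (Yd k r n 0)
      = map_pmf (\<lambda>y. piS k r (if y = fork_opt k r then None else Some y)) (map_pmf rev (ea_init k))"
    by (simp add: Yd_def ea_stopped_def map_pmf_comp rho_rev)
  then show ?case by (simp add: init_rev Yd_def ea_stopped_def map_pmf_comp)
next
  case (Suc t)
  have "map_pmf (map_option rev) (Yd k r n (Suc t)) = Yd k r n t \<bind> (\<lambda>s. map_pmf (map_option rev) (S2 k r n s))"
    by (simp add: Y_Suc map_bind_pmf)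
  also have "\<dots> = Yd k r n t \<bind> (\<lambda>s. S2 k r n (map_option rev s))"
    by (intro bind_pmf_cong refl S2_rev set_Y) auto
  also have "\<dots> = map_pmf (map_option rev) (Yd k r n t) \<bind> S2 k r n"
    by (simp add: bind_map_pmf)
  also have "\<dots> = Yd k r n (Suc t)" using Suc.IH by (simp add: Y_Suc)
  finally show ?case .
qed

end

definition pT :: "nat \<Rightarrow> nat \<Rightarrow> nat \<Rightarrow> real" where
  "pT k r n = pmf (ea_step (fork k r) n (trap k r)) (fork_opt k r)"

definition hL :: "nat \<Rightarrow> nat \<Rightarrow> nat \<Rightarrow> bool list option \<Rightarrow> ennreal" where
  "hL k r n s = (case s of None \<Rightarrow> 0 | Some x \<Rightarrow> if x = trap k r then ennreal (1 / pT k r n) else ennreal (1 / pT k r n / 2))"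

definition aS :: "nat \<Rightarrow> nat \<Rightarrow> nat \<Rightarrow> bool list option \<Rightarrow> ennreal" where
  "aS k r n s = (case s of None \<Rightarrow> 0 | Some x \<Rightarrow> if x = trap k r \<or> x = fork_opt k r then 0
      else ennreal (pmf (ea_step (fork k r) n x) (trap k r)))"

definition bS :: "nat \<Rightarrow> nat \<Rightarrow> nat \<Rightarrow> bool list option \<Rightarrow> ennreal" where
  "bS k r n s = (case s of None \<Rightarrow> 0 | Some x \<Rightarrow> if x = trap k r \<or> x = fork_opt k r then 0
      else ennreal (pmf (ea_step (fork k r) n x) (fork_opt k r)))"

context
  fixes k r n :: nat
  assumes r1: "1 \<le> r" and kr: "2 * r \<le> k" and kn: "k \<le> n"
begin

lemma pT_val: "pT k r n = (1 / real n) ^ (2 * r) * (1 - 1 / real n) ^ (k - 2 * r)"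
proof -
  have n1: "1 \<le> n" using r1 kr kn by linarith
  then show ?thesis unfolding pT_def pT_eq[OF r1 kr kn]
    by (simp add: pmf_mutate len_trap[OF r1 kr] len_opt[OF r1 kr] ham_trap_opt[OF r1 kr])
qed

lemma pT_pos: "0 < pT k r n"
proof -
  have "2 \<le> n" using r1 kr kn by linarith
  then show ?thesis unfolding pT_val by simp
qed

lemma pT_le: "pT k r n \<le> (1 / real n) ^ (2 * r)"
proof -
  have "2 \<le> n" using r1 kr kn by linarith
  then have "(1 - 1 / real n) ^ (k - 2 * r) \<le> 1" by (intro power_le_one) auto
  then show ?thesis unfolding pT_val using \<open>2 \<le> n\<close> by (intro mult_left_le) auto
qed

lemma bS_rev: "bS k r n s = aS k r n (map_option rev s)"
proof (cases s)
  case (Some x)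
  have n1: "1 \<le> n" using r1 kr kn by linarith
  show ?thesis
  proof (cases "x = trap k r \<or> x = fork_opt k r")
    case True
    then show ?thesis using Some rev_trap[OF r1 kr] rev_opt[OF r1 kr] by (auto simp: aS_def bS_def)
  next
    case False
    then have "rev x \<noteq> trap k r" "rev x \<noteq> fork_opt k r"
      using rev_trap[OF r1 kr] rev_opt[OF r1 kr] by (metis rev_rev_ident)+
    moreover have "pmf (ea_step (fork k r) n (rev x)) (trap k r) = pmf (ea_step (fork k r) n x) (fork_opt k r)"
    proof -
      have "pmf (ea_step (fork k r) n (rev x)) (trap k r) = pmf (map_pmf rev (ea_step (fork k r) n x)) (rev (fork_opt k r))"
        using False ea_step_rev[OF r1 kr _ _ n1] rev_opt[OF r1 kr] by simp
      also have "\<dots> = pmf (ea_step (fork k r) n x) (fork_opt k r)" by (rule pmf_map_inj') (simp add: inj_def)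
      finally show ?thesis .
    qed
    ultimately show ?thesis using Some False by (simp add: aS_def bS_def)
  qed
qed (simp add: aS_def bS_def)

lemma sym_integral:
  "(\<integral>\<^sup>+ s. aS k r n (piS k r s) \<partial>ea_stopped (fork k r) n k (fork_opt k r) t)
    = (\<integral>\<^sup>+ s. bS k r n (piS k r s) \<partial>ea_stopped (fork k r) n k (fork_opt k r) t)"
proof -
  have "(\<integral>\<^sup>+ s. bS k r n (piS k r s) \<partial>ea_stopped (fork k r) n k (fork_opt k r) t)
      = (\<integral>\<^sup>+ s. bS k r n s \<partial>Yd k r n t)" by (simp add: Yd_def)
  also have "\<dots> = (\<integral>\<^sup>+ s. aS k r n s \<partial>map_pmf (map_option rev) (Yd k r n t))"
    by (simp add: bS_rev)
  also have "\<dots> = (\<integral>\<^sup>+ s. aS k r n s \<partial>Yd k r n t)" by (simp only: Y_sym[OF r1 kr kn])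
  also have "\<dots> = (\<integral>\<^sup>+ s. aS k r n (piS k r s) \<partial>ea_stopped (fork k r) n k (fork_opt k r) t)"
    by (simp add: Yd_def)
  finally show ?thesis by simp
qed

end

context
  fixes k r n :: nat
  assumes r1: "1 \<le> r" and kr: "2 * r \<le> k" and kn: "k \<le> n"
begin

lemma step_lo:
  assumes "s = None \<or> (\<exists>x. s = Some x \<and> length x = k \<and> x \<noteq> fork_opt k r)"
  shows "(\<integral>\<^sup>+ s'. hL k r n s' \<partial>ea_stopped_step (fork k r) n (fork_opt k r) s)
      + indicator {Some (trap k r)} s + ennreal (1 / pT k r n / 2) * bS k r n (piS k r s)
      = hL k r n s + ennreal (1 / pT k r n / 2) * aS k r n (piS k r s)"
proof -
  define H where "H = 1 / pT k r n"
  have H0: "0 < H" using pT_pos[OF r1 kr kn] by (simp add: H_def)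
  have HpT: "H * pT k r n = 1" using pT_pos[OF r1 kr kn] by (simp add: H_def)
  have tno: "trap k r \<noteq> fork_opt k r" using trap_ne_opt[OF r1 kr] .
  let ?sig = "\<lambda>y. if y = fork_opt k r then None else Some y"
  consider "s = None" | "s = Some (trap k r)" | x where "s = Some x" "x \<noteq> trap k r" "x \<noteq> fork_opt k r"
    using assms by blast
  then show ?thesis
  proof cases
    case 1 then show ?thesis by (simp add: ea_stopped_step_def hL_def aS_def bS_def piS_def)
  next
    case 2
    let ?E = "ea_step (fork k r) n (trap k r)"
    have pw: "hL k r n (?sig z) + ennreal H * indicator {fork_opt k r} z = ennreal H"
      if "z \<in> set_pmf ?E" for z
      using set_ea_step_trap[OF r1 kr kn] that tno by (auto simp: hL_def H_def)
    have "(\<integral>\<^sup>+ z. hL k r n (?sig z) \<partial>?E) + 1 = (\<integral>\<^sup>+ z. hL k r n (?sig z) \<partial>?E) + ennreal H * ennreal (pT k r n)"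
      using HpT H0 pT_pos[OF r1 kr kn] by (simp add: ennreal_mult[symmetric] del: ennreal_mult)
    also have "\<dots> = (\<integral>\<^sup>+ z. hL k r n (?sig z) + ennreal H * indicator {fork_opt k r} z \<partial>?E)"
      by (simp add: nn_integral_add nn_integral_cmult_indicator emeasure_pmf_single pT_def)
    also have "\<dots> = (\<integral>\<^sup>+ z. ennreal H \<partial>?E)"
      by (intro nn_integral_cong_AE) (simp add: AE_measure_pmf_iff pw)
    also have "\<dots> = ennreal H" by (simp add: measure_pmf.emeasure_space_1)
    finally have "(\<integral>\<^sup>+ z. hL k r n (?sig z) \<partial>?E) + 1 = ennreal H" .
    then show ?thesis using 2 by (simp add: ea_stopped_step_def hL_def aS_def bS_def piS_def H_def)
  next
    case 3
    let ?E = "ea_step (fork k r) n x"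
    define c where "c = ennreal (H / 2)"
    have pw: "hL k r n (?sig z) + c * indicator {fork_opt k r} z = c + c * indicator {trap k r} z" for z
      using tno H0 by (auto simp: hL_def H_def c_def ennreal_plus[symmetric] simp del: ennreal_plus)
    have "(\<integral>\<^sup>+ z. hL k r n (?sig z) \<partial>?E) + c * ennreal (pmf ?E (fork_opt k r))
        = (\<integral>\<^sup>+ z. hL k r n (?sig z) + c * indicator {fork_opt k r} z \<partial>?E)"
      by (simp add: nn_integral_add nn_integral_cmult_indicator emeasure_pmf_single)
    also have "\<dots> = (\<integral>\<^sup>+ z. c + c * indicator {trap k r} z \<partial>?E)" by (simp only: pw)
    also have "\<dots> = c + c * ennreal (pmf ?E (trap k r))"
      by (simp add: nn_integral_add nn_integral_cmult_indicator emeasure_pmf_single measure_pmf.emeasure_space_1)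
    finally have "(\<integral>\<^sup>+ z. hL k r n (?sig z) \<partial>?E) + c * ennreal (pmf ?E (fork_opt k r))
        = c + c * ennreal (pmf ?E (trap k r))" .
    moreover have "piS k r s = Some x" using 3 by (simp add: piS_def)
    ultimately show ?thesis using 3 by (simp add: ea_stopped_step_def hL_def aS_def bS_def H_def c_def)
  qed
qed

end

context
  fixes k r n :: nat
  assumes r1: "1 \<le> r" and kr: "2 * r \<le> k" and kn: "k \<le> n"
begin

abbreviation "DD t \<equiv> ea_stopped (fork k r) n k (fork_opt k r) t"

lemma chain_lo:
  "(\<integral>\<^sup>+ s. hL k r n s \<partial>DD (Suc t)) + emeasure (DD t) {Some (trap k r)}
   = (\<integral>\<^sup>+ s. hL k r n s \<partial>DD t)"
proof -
  let ?S = "ea_stopped_step (fork k r) n (fork_opt k r)"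
  define c where "c = ennreal (1 / pT k r n / 2)"
  define X where "X = (\<integral>\<^sup>+ s. aS k r n (piS k r s) \<partial>DD t)"
  have X1: "X \<le> 1"
  proof -
    have "X \<le> (\<integral>\<^sup>+ s. 1 \<partial>DD t)" unfolding X_def
      by (intro nn_integral_mono) (auto simp: aS_def pmf_le_1 split: option.splits)
    then show ?thesis by (simp add: measure_pmf.emeasure_space_1)
  qed
  have "X \<noteq> \<top>" using X1 by (auto simp: top_unique)
  then have cX: "c * X \<noteq> \<infinity>"
    by (simp add: c_def ennreal_mult_eq_top_iff)
  have "((\<integral>\<^sup>+ s. hL k r n s \<partial>DD (Suc t)) + emeasure (DD t) {Some (trap k r)}) + c * X
      = (\<integral>\<^sup>+ s. (\<integral>\<^sup>+ s'. hL k r n s' \<partial>?S s) + indicator {Some (trap k r)} s + c * bS k r n (piS k r s) \<partial>DD t)"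
    by (simp add: ea_stopped_Suc nn_integral_add nn_integral_cmult X_def sym_integral[OF r1 kr kn])
  also have "\<dots> = (\<integral>\<^sup>+ s. hL k r n s + c * aS k r n (piS k r s) \<partial>DD t)"
  proof (intro nn_integral_cong_AE)
    have "\<forall>s\<in>set_pmf (DD t). (\<integral>\<^sup>+ s'. hL k r n s' \<partial>?S s) + indicator {Some (trap k r)} s + c * bS k r n (piS k r s)
        = hL k r n s + c * aS k r n (piS k r s)"
    proof
      fix s assume "s \<in> set_pmf (DD t)"
      from set_ea_stopped[OF this] show "(\<integral>\<^sup>+ s'. hL k r n s' \<partial>?S s) + indicator {Some (trap k r)} s + c * bS k r n (piS k r s)
        = hL k r n s + c * aS k r n (piS k r s)"
        unfolding c_def by (rule step_lo[OF r1 kr kn])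
    qed
    then show "AE s in DD t. (\<integral>\<^sup>+ s'. hL k r n s' \<partial>?S s) + indicator {Some (trap k r)} s + c * bS k r n (piS k r s)
        = hL k r n s + c * aS k r n (piS k r s)"
      by (simp add: AE_measure_pmf_iff)
  qed
  also have "\<dots> = (\<integral>\<^sup>+ s. hL k r n s \<partial>DD t) + c * X"
    by (simp add: nn_integral_add nn_integral_cmult X_def)
  finally show ?thesis using cX
    by (metis add.commute ennreal_add_left_cancel)
qed

lemma tele_lo:
  "(\<Sum>t<m. emeasure (DD t) {Some (trap k r)}) + (\<integral>\<^sup>+ s. hL k r n s \<partial>DD m)
   = (\<integral>\<^sup>+ s. hL k r n s \<partial>DD 0)"
proof (induction m)
  case 0 then show ?case by simp
next
  case (Suc m)
  have "(\<Sum>t<Suc m. emeasure (DD t) {Some (trap k r)}) + (\<integral>\<^sup>+ s. hL k r n s \<partial>DD (Suc m))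
     = (\<Sum>t<m. emeasure (DD t) {Some (trap k r)}) +
       ((\<integral>\<^sup>+ s. hL k r n s \<partial>DD (Suc m)) + emeasure (DD m) {Some (trap k r)})"
    by (simp add: algebra_simps)
  also have "\<dots> = (\<Sum>t<m. emeasure (DD t) {Some (trap k r)}) + (\<integral>\<^sup>+ s. hL k r n s \<partial>DD m)"
    by (simp only: chain_lo)
  finally show ?case using Suc.IH by simp
qed

lemma lower_partial:
  "(1 / pT k r n / 2) * measure (DD 0) (range Some)
    \<le> (\<Sum>t<m. measure (DD t) (range Some)) + (1 / pT k r n) * measure (DD m) (range Some)"
proof -
  define H where "H = 1 / pT k r n"
  have H0: "0 < H" using pT_pos[OF r1 kr kn] by (simp add: H_def)
  have HH: "H / 2 \<le> H" using H0 by simp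
  have lo: "ennreal (H / 2) * indicator (range Some) s \<le> hL k r n s" for s
    using H0 HH by (cases s) (auto simp: hL_def H_def[symmetric] ennreal_leI)
  have hi: "hL k r n s \<le> ennreal H * indicator (range Some) s" for s
    using H0 HH by (cases s) (auto simp: hL_def H_def[symmetric] ennreal_leI)
  have "ennreal (H / 2) * emeasure (DD 0) (range Some) = (\<integral>\<^sup>+ s. ennreal (H / 2) * indicator (range Some) s \<partial>DD 0)"
    by (simp add: nn_integral_cmult_indicator)
  also have "\<dots> \<le> (\<integral>\<^sup>+ s. hL k r n s \<partial>DD 0)" by (intro nn_integral_mono lo)
  also have "\<dots> = (\<Sum>t<m. emeasure (DD t) {Some (trap k r)}) + (\<integral>\<^sup>+ s. hL k r n s \<partial>DD m)"
    by (simp only: tele_lo)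
  also have "\<dots> \<le> (\<Sum>t<m. emeasure (DD t) (range Some)) + (\<integral>\<^sup>+ s. ennreal H * indicator (range Some) s \<partial>DD m)"
    by (intro add_mono sum_mono emeasure_mono nn_integral_mono hi) auto
  also have "\<dots> = (\<Sum>t<m. emeasure (DD t) (range Some)) + ennreal H * emeasure (DD m) (range Some)"
    by (simp add: nn_integral_cmult_indicator)
  finally have "ennreal (H / 2 * measure (DD 0) (range Some))
      \<le> ennreal (\<Sum>t<m. measure (DD t) (range Some)) + ennreal (H * measure (DD m) (range Some))"
    using H0 by (simp add: measure_pmf.emeasure_eq_measure sum_ennreal ennreal_mult[symmetric]
       del: ennreal_plus ennreal_mult)
  also have "\<dots> = ennreal ((\<Sum>t<m. measure (DD t) (range Some)) + H * measure (DD m) (range Some))"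
    using H0 by (intro ennreal_plus[symmetric] sum_nonneg) auto
  finally have "ennreal (H / 2 * measure (DD 0) (range Some))
      \<le> ennreal ((\<Sum>t<m. measure (DD t) (range Some)) + H * measure (DD m) (range Some))" .
  then show ?thesis using H0 unfolding H_def
    by (subst (asm) ennreal_le_iff) (auto intro!: add_nonneg_nonneg sum_nonneg)
qed

end

lemma Q_lb:
  assumes "2 \<le> n"
  shows "exp (-2) \<le> Qn n"
proof -
  define x where "x = 1 / real n"
  have x0: "0 \<le> x" "x \<le> 1/2" using assms by (auto simp: x_def field_simps)
  have "- x - 2 * x\<^sup>2 \<le> ln (1 - x)" by (rule ln_one_minus_pos_lower_bound[OF x0])
  then have "real n * (- x - 2 * x\<^sup>2) \<le> real n * ln (1 - x)" by (intro mult_left_mono) auto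
  moreover have "real n * (- x - 2 * x\<^sup>2) = -1 - 2 / real n"
    using assms by (simp add: x_def power2_eq_square field_simps)
  moreover have "-2 \<le> -1 - 2 / real n" using assms by (simp add: field_simps)
  ultimately have "-2 \<le> real n * ln (1 - x)" by linarith
  moreover have "Qn n = exp (real n * ln (1 - x))"
  proof -
    have "0 < 1 - x" using x0 by simp
    then have "exp (real n * ln (1 - x)) = (1 - x) ^ n"
      by (simp add: ln_realpow[symmetric])
    then show ?thesis by (simp add: Qn_def x_def)
  qed
  ultimately show ?thesis by simp
qed

context
  fixes k r n :: nat
  assumes r1: "1 \<le> r" and kr: "2 * r \<le> k" and kn: "k \<le> n"
begin

lemma P0_ge: "1 / 2 \<le> measure (DD k r n 0) (range Some)"
proof -
  let ?A = "{xs :: bool list. length xs = k}"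
  have "trap k r \<in> ?A" "fork_opt k r \<in> ?A" using len_trap[OF r1 kr] len_opt[OF r1 kr] by auto
  then have "{trap k r, fork_opt k r} \<subseteq> ?A" by auto
  then have "card {trap k r, fork_opt k r} \<le> card ?A" by (intro card_mono finite_len)
  then have cA: "2 \<le> card ?A" using trap_ne_opt[OF r1 kr] by simp
  have "(\<lambda>x. if x = fork_opt k r then None else Some x) -` range Some = UNIV - {fork_opt k r}" by auto
  then have "measure (DD k r n 0) (range Some) = 1 - measure (ea_init k) {fork_opt k r}"
    using measure_pmf.prob_compl[of "{fork_opt k r}" "ea_init k"] by (simp add: ea_stopped_def)
  also have "measure (ea_init k) {fork_opt k r} = 1 / real (card ?A)"
    using \<open>fork_opt k r \<in> ?A\<close> by (simp add: ea_init_def measure_pmf_single pmf_of_set[OF nonempty_len finite_len])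
  finally have eq: "measure (DD k r n 0) (range Some) = 1 - 1 / real (card ?A)" .
  moreover have "1 / real (card ?A) \<le> 1 / 2" using cA by (simp add: divide_simps)
  ultimately show ?thesis by linarith
qed

lemma bounds:
  "ennreal (1/4 * real n ^ (2 * r)) \<le> expected_opt_time (fork k r) n k (fork_opt k r) \<and>
   expected_opt_time (fork k r) n k (fork_opt k r) \<le> ennreal (3 * exp 2 * real n ^ (2 * r))"
proof -
  define P where "P t = measure (DD k r n t) (range Some)" for t
  define B where "B = real k * (real n / Qn n) + real n ^ r / Qn n + real n ^ (2*r) / Qn n"
  have n2: "2 \<le> n" using r1 kr kn by linarith
  have P0: "0 \<le> P t" for t by (simp add: P_def)
  have Pb: "(\<Sum>t<m. P t) \<le> B" for m using upper_partial[OF r1 kr kn] by (simp add: P_def B_def)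
  have sP: "summable P" by (rule summableI_nonneg_bounded[OF P0 Pb])
  have E: "expected_opt_time (fork k r) n k (fork_opt k r) = ennreal (suminf P)"
    unfolding expected_opt_time_def P_def[symmetric] by (rule suminf_ennreal2[OF P0 sP])
  have Qp: "0 < Qn n" using Qpos[OF r1 kr kn] .
  have Ql: "exp (-2) \<le> Qn n" using Q_lb[OF n2] .
  have iQ: "1 / Qn n \<le> exp 2"
  proof -
    have "1 / Qn n \<le> 1 / exp (-2)" using Ql Qp by (intro divide_left_mono) auto
    then show ?thesis by (simp add: exp_minus inverse_eq_divide)
  qed
  have np: "1 \<le> real n" using n2 by simp
  have pw1: "real n ^ 2 \<le> real n ^ (2 * r)" using np r1 by (intro power_increasing) auto
  have pw2: "real n ^ r \<le> real n ^ (2 * r)" using np r1 by (intro power_increasing) auto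
  have "real k * real n \<le> real n ^ 2" using kn by (simp add: power2_eq_square mult_right_mono)
  then have "real k * real n + real n ^ r + real n ^ (2*r) \<le> 3 * real n ^ (2 * r)"
    using pw1 pw2 by linarith
  then have "(real k * real n + real n ^ r + real n ^ (2*r)) * (1 / Qn n) \<le> 3 * real n ^ (2 * r) * (1 / Qn n)"
    using Qp by (intro mult_right_mono) auto
  moreover have "B = (real k * real n + real n ^ r + real n ^ (2*r)) * (1 / Qn n)"
    unfolding B_def using Qp by (simp add: field_simps)
  ultimately have "B \<le> 3 * real n ^ (2 * r) * (1 / Qn n)" by simp
  also have "\<dots> \<le> 3 * real n ^ (2 * r) * exp 2" using iQ by (intro mult_left_mono) auto
  finally have Bb: "B \<le> 3 * exp 2 * real n ^ (2 * r)" by (simp add: algebra_simps)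
  have up: "suminf P \<le> 3 * exp 2 * real n ^ (2 * r)"
    using suminf_le_const[OF sP Pb] Bb by linarith
  define H where "H = 1 / pT k r n"
  have Hge: "real n ^ (2 * r) \<le> H"
  proof -
    have "pT k r n \<le> 1 / real n ^ (2 * r)" using pT_le[OF r1 kr kn] by (simp add: power_one_over)
    then show ?thesis using pT_pos[OF r1 kr kn] n2 unfolding H_def
      by (simp add: field_simps)
  qed
  have lp: "H / 2 * P 0 \<le> (\<Sum>t<m. P t) + H * P m" for m
    using lower_partial[OF r1 kr kn, of m] by (simp add: P_def H_def)
  have lim: "(\<lambda>m. (\<Sum>t<m. P t) + H * P m) \<longlonglongrightarrow> suminf P + H * 0"
    by (intro tendsto_add tendsto_mult summable_LIMSEQ sP tendsto_const summable_LIMSEQ_zero)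
  have "H / 2 * P 0 \<le> suminf P + H * 0"
    by (rule LIMSEQ_le_const[OF lim]) (use lp in blast)
  then have "H / 2 * P 0 \<le> suminf P" by simp
  moreover have "1 / 2 \<le> P 0" using P0_ge unfolding P_def .
  moreover have "H / 2 * (1 / 2) \<le> H / 2 * P 0"
    using \<open>1 / 2 \<le> P 0\<close> pT_pos[OF r1 kr kn] unfolding H_def by (intro mult_left_mono) auto
  ultimately have "H / 4 \<le> suminf P" by simp
  then have low: "1/4 * real n ^ (2 * r) \<le> suminf P" using Hge by simp
  show ?thesis unfolding E using up low by (simp add: ennreal_leI)
qed

end

theorem theorem2:
  fixes r :: nat
  assumes "r \<ge> 2"
  shows "\<exists>c1 c2 :: real. c1 > 0 \<and> c2 > 0 \<and> (\<exists>N. \<forall>n \<ge> N. \<forall>k.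
           2 * r \<le> k \<and> k \<le> n \<longrightarrow>
             ennreal (c1 * real n ^ (2 * r)) \<le> expected_opt_time (fork k r) n k (fork_opt k r) \<and>
             expected_opt_time (fork k r) n k (fork_opt k r) \<le> ennreal (c2 * real n ^ (2 * r)))"
proof (intro exI conjI)
  show "(0::real) < 1/4" by simp
  show "(0::real) < 3 * exp 2" by simp
  show "\<forall>n\<ge>0. \<forall>k. 2 * r \<le> k \<and> k \<le> n \<longrightarrow>
      ennreal (1/4 * real n ^ (2 * r)) \<le> expected_opt_time (fork k r) n k (fork_opt k r) \<and>
      expected_opt_time (fork k r) n k (fork_opt k r) \<le> ennreal (3 * exp 2 * real n ^ (2 * r))"
  proof (intro allI impI)
    fix n k :: nat assume h: "2 * r \<le> k \<and> k \<le> n"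
    have "1 \<le> r" using assms by simp
    then show "ennreal (1/4 * real n ^ (2 * r)) \<le> expected_opt_time (fork k r) n k (fork_opt k r) \<and>
      expected_opt_time (fork k r) n k (fork_opt k r) \<le> ennreal (3 * exp 2 * real n ^ (2 * r))"
      using bounds h by blast
  qed
qed

end
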